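(* Let $(a_n)_{n\in\mathbb{N}}$ be a sequence of real numbers with $a_1>a_2>\cdots>a_n>a_{n+1}>\cdots\ge 0$, and let $\alpha\ge0$ be its limit. Consider the statements: (i) $\alpha=0$; (ii) for every integer $k\ge0$ and every $\varepsilon>0$ there exists $\delta>0$ such that for all $n\in\mathbb{N}$, $a_n<\varepsilon+\delta$ implies $a_{n+k}\le\varepsilon$; (iii) for every integer $k\ge1$ and every $\varepsilon>0$ there exists $\delta>0$ such that for all $n\in\mathbb{N}$, $\frac{1}{2}(a_n+a_{n+1})<\varepsilon+\delta$ implies $a_{n+k}\le\varepsilon$; (iv) for every $\varepsilon\in(0,\infty)\setminus\{a_k : k\in\mathbb{N}\}$ there exists $\delta>0$ such that for all $m,n\in\mathbb{N}$, $a_m+a_n<\varepsilon+\delta$ implies $a_m+a_n\le\varepsilon$; (v) for every $\varepsilon>0$ there exists $\delta>0$ such that for all $m,n\in\mathbb{N}$, $a_m+a_n<\varepsilon+\delta$ implies $a_m+a_n\le\varepsilon$. Then (i), (ii), (iii), (iv) are equivalent; moreover (v) implies (i), but (i) does not imply (v).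
   Context: $\mathbb{N}=\{1,2,3,\dots\}$. *)

theory Defs
  imports Complex_Main
begin

text \<open>Sequences are indexed by the positive naturals; the value at index 0 is ignored.\<close>

definition admissible_seq :: "(nat \<Rightarrow> real) \<Rightarrow> bool" where
  "admissible_seq a \<longleftrightarrow> (\<forall>n\<ge>1. a (n + 1) < a n) \<and> (\<forall>n\<ge>1. 0 \<le> a n)"

definition cond_ii :: "(nat \<Rightarrow> real) \<Rightarrow> bool" where
  "cond_ii a \<longleftrightarrow> (\<forall>(k::nat) (\<epsilon>::real). \<epsilon> > 0 \<longrightarrow>
     (\<exists>\<delta>>0. \<forall>n\<ge>1. a n < \<epsilon> + \<delta> \<longrightarrow> a (n + k) \<le> \<epsilon>))"

definition cond_iii :: "(nat \<Rightarrow> real) \<Rightarrow> bool" where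
  "cond_iii a \<longleftrightarrow> (\<forall>(k::nat) (\<epsilon>::real). k \<ge> 1 \<longrightarrow> \<epsilon> > 0 \<longrightarrow>
     (\<exists>\<delta>>0. \<forall>n\<ge>1. (a n + a (n + 1)) / 2 < \<epsilon> + \<delta> \<longrightarrow> a (n + k) \<le> \<epsilon>))"

definition cond_iv :: "(nat \<Rightarrow> real) \<Rightarrow> bool" where
  "cond_iv a \<longleftrightarrow> (\<forall>\<epsilon>::real. \<epsilon> > 0 \<longrightarrow> \<epsilon> \<notin> {a k | k. k \<ge> 1} \<longrightarrow>
     (\<exists>\<delta>>0. \<forall>m\<ge>1. \<forall>n\<ge>1. a m + a n < \<epsilon> + \<delta> \<longrightarrow> a m + a n \<le> \<epsilon>))"

definition cond_v :: "(nat \<Rightarrow> real) \<Rightarrow> bool" where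
  "cond_v a \<longleftrightarrow> (\<forall>\<epsilon>::real. \<epsilon> > 0 \<longrightarrow>
     (\<exists>\<delta>>0. \<forall>m\<ge>1. \<forall>n\<ge>1. a m + a n < \<epsilon> + \<delta> \<longrightarrow> a m + a n \<le> \<epsilon>))"

end

theory Submission
  imports Defs
begin

lemma adm_strict:
  assumes "admissible_seq a" "1 \<le> n" "n < m"
  shows "a m < a n"
  using assms(3)
proof (induction m)
  case 0 then show ?case by simp
next
  case (Suc m)
  have s: "a (Suc m) < a m" if "m \<ge> 1" using assms(1) that unfolding admissible_seq_def by auto
  show ?case
  proof (cases "n < m")
    case True then show ?thesis using Suc s assms(2) by force
  next
    case False then have "n = m" using Suc by simp
    then show ?thesis using s assms(2) by simp
  qed
qed

lemma adm_mono:
  assumes "admissible_seq a" "1 \<le> n" "n \<le> m"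
  shows "a m \<le> a n"
  using adm_strict[OF assms(1,2)] assms(3) by (cases "n = m") (auto simp: less_imp_le)

lemma adm_nonneg: "admissible_seq a \<Longrightarrow> 1 \<le> n \<Longrightarrow> 0 \<le> a n"
  unfolding admissible_seq_def by auto

lemma adm_lower:
  assumes "admissible_seq a" "a \<longlonglongrightarrow> \<alpha>" "1 \<le> n"
  shows "\<alpha> < a n"
proof -
  have "\<alpha> \<le> a (n+1)"
    using assms(2) by (rule LIMSEQ_le_const2) (use adm_mono[OF assms(1)] assms(3) in \<open>intro exI[of _ "n+1"], auto\<close>)
  also have "a (n+1) < a n" using adm_strict[OF assms(1,3)] by simp
  finally show ?thesis .
qed

lemma adm_close:
  fixes a :: "nat \<Rightarrow> real"
  assumes "a \<longlonglongrightarrow> \<alpha>" "\<delta> > 0"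
  shows "\<exists>N. \<forall>n\<ge>N. a n < \<alpha> + \<delta>"
proof -
  obtain no where "\<forall>n\<ge>no. norm (a n - \<alpha>) < \<delta>" using assms LIMSEQ_iff by blast
  then have "\<forall>n\<ge>no. a n < \<alpha> + \<delta>" by (auto simp: abs_less_iff)
  then show ?thesis by blast
qed

lemma adm_close1:
  fixes a :: "nat \<Rightarrow> real"
  assumes "a \<longlonglongrightarrow> \<alpha>" "\<delta> > 0"
  shows "\<exists>n\<ge>1. a n < \<alpha> + \<delta>"
proof -
  obtain N where "\<forall>n\<ge>N. a n < \<alpha> + \<delta>" using adm_close[OF assms] by blast
  then show ?thesis by (intro exI[of _ "max N 1"]) auto
qed

lemma i_ii:
  assumes adm: "admissible_seq a" and lim: "a \<longlonglongrightarrow> 0"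
  shows "cond_ii a"
  unfolding cond_ii_def
proof (intro allI impI)
  fix k :: nat and \<epsilon> :: real assume e: "\<epsilon> > 0"
  obtain N where N: "\<forall>n\<ge>N. a n < 0 + \<epsilon>" using adm_close[OF lim e] by blast
  have ex: "\<exists>M. M \<ge> 1 \<and> a (M + k) \<le> \<epsilon>"
    using N[rule_format, of "max N 1 + k"] by (intro exI[of _ "max N 1"]) (auto simp: less_imp_le)
  define M where "M = (LEAST M. M \<ge> 1 \<and> a (M + k) \<le> \<epsilon>)"
  have M: "M \<ge> 1" "a (M + k) \<le> \<epsilon>" using LeastI_ex[OF ex] unfolding M_def by auto
  have good: "a (n + k) \<le> \<epsilon>" if "n \<ge> M" for n
    using adm_mono[OF adm, of "M+k" "n+k"] M that by auto
  show "\<exists>\<delta>>0. \<forall>n\<ge>1. a n < \<epsilon> + \<delta> \<longrightarrow> a (n + k) \<le> \<epsilon>"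
  proof (cases "M = 1")
    case True then show ?thesis using good by (intro exI[of _ 1]) auto
  next
    case False
    then have M1: "M - 1 \<ge> 1" using M by auto
    have "\<not> (M - 1 \<ge> 1 \<and> a (M - 1 + k) \<le> \<epsilon>)"
      using not_less_Least[of "M - 1" "\<lambda>M. M \<ge> 1 \<and> a (M + k) \<le> \<epsilon>"] M unfolding M_def by auto
    then have gt: "a (M - 1 + k) > \<epsilon>" using M1 by auto
    have "a (M - 1 + k) \<le> a (M - 1)" using adm_mono[OF adm M1] by simp
    then have pos: "a (M - 1) - \<epsilon> > 0" using gt by simp
    show ?thesis
    proof (intro exI[of _ "a (M - 1) - \<epsilon>"] conjI pos allI impI)
      fix n :: nat assume n: "n \<ge> 1" "a n < \<epsilon> + (a (M - 1) - \<epsilon>)"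
      have "n \<ge> M"
      proof (rule ccontr)
        assume "\<not> n \<ge> M" then have "n \<le> M - 1" by simp
        then have "a (M - 1) \<le> a n" using adm_mono[OF adm n(1)] by simp
        then show False using n by simp
      qed
      then show "a (n + k) \<le> \<epsilon>" by (rule good)
    qed
  qed
qed

lemma ii_i:
  assumes adm: "admissible_seq a" and lim: "a \<longlonglongrightarrow> \<alpha>" and c: "cond_ii a"
  shows "\<alpha> = 0"
proof (rule ccontr)
  assume "\<alpha> \<noteq> 0"
  moreover have "\<alpha> \<ge> 0" using lim by (rule LIMSEQ_le_const) (use adm_nonneg[OF adm] in auto)
  ultimately have a0: "\<alpha> > 0" by simp
  obtain \<delta> where d: "\<delta> > 0" "\<forall>n\<ge>1. a n < \<alpha> + \<delta> \<longrightarrow> a (n + 1) \<le> \<alpha>"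
    using c a0 unfolding cond_ii_def by blast
  obtain n where n: "n \<ge> 1" "a n < \<alpha> + \<delta>" using adm_close1[OF lim d(1)] by blast
  have "a (n+1) \<le> \<alpha>" using d n by blast
  moreover have "\<alpha> < a (n+1)" using adm_lower[OF adm lim, of "n+1"] by simp
  ultimately show False by simp
qed

lemma i_iii:
  assumes adm: "admissible_seq a" and lim: "a \<longlonglongrightarrow> 0"
  shows "cond_iii a"
  unfolding cond_iii_def
proof (intro allI impI)
  fix k :: nat and \<epsilon> :: real assume k: "k \<ge> 1" and e: "\<epsilon> > 0"
  obtain \<delta> where d: "\<delta> > 0" "\<forall>n\<ge>1. a n < \<epsilon> + \<delta> \<longrightarrow> a (n + (k - 1)) \<le> \<epsilon>"
    using i_ii[OF adm lim] e unfolding cond_ii_def by blast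
  show "\<exists>\<delta>>0. \<forall>n\<ge>1. (a n + a (n + 1)) / 2 < \<epsilon> + \<delta> \<longrightarrow> a (n + k) \<le> \<epsilon>"
  proof (intro exI[of _ \<delta>] conjI d(1) allI impI)
    fix n :: nat assume n: "n \<ge> 1" "(a n + a (n + 1)) / 2 < \<epsilon> + \<delta>"
    have "a (n+1) < a n" using adm_strict[OF adm n(1)] by simp
    then have "a (n+1) < \<epsilon> + \<delta>" using n by simp
    then have "a (n + 1 + (k - 1)) \<le> \<epsilon>" using d(2) by auto
    then show "a (n + k) \<le> \<epsilon>" using k by simp
  qed
qed

lemma iii_i:
  assumes adm: "admissible_seq a" and lim: "a \<longlonglongrightarrow> \<alpha>" and c: "cond_iii a"
  shows "\<alpha> = 0"
proof (rule ccontr)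
  assume "\<alpha> \<noteq> 0"
  moreover have "\<alpha> \<ge> 0" using lim by (rule LIMSEQ_le_const) (use adm_nonneg[OF adm] in auto)
  ultimately have a0: "\<alpha> > 0" by simp
  obtain \<delta> where d: "\<delta> > 0" "\<forall>n\<ge>1. (a n + a (n + 1)) / 2 < \<alpha> + \<delta> \<longrightarrow> a (n + 1) \<le> \<alpha>"
    using c a0 unfolding cond_iii_def by blast
  obtain n where n: "n \<ge> 1" "a n < \<alpha> + \<delta>" using adm_close1[OF lim d(1)] by blast
  have "a (n+1) < a n" using adm_strict[OF adm n(1)] by simp
  then have "(a n + a (n + 1)) / 2 < \<alpha> + \<delta>" using n by simp
  then have "a (n+1) \<le> \<alpha>" using d n by blast
  moreover have "\<alpha> < a (n+1)" using adm_lower[OF adm lim, of "n+1"] by simp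
  ultimately show False by simp
qed

lemma iv_i:
  assumes adm: "admissible_seq a" and lim: "a \<longlonglongrightarrow> \<alpha>" and c: "cond_iv a"
  shows "\<alpha> = 0"
proof (rule ccontr)
  assume "\<alpha> \<noteq> 0"
  moreover have "\<alpha> \<ge> 0" using lim by (rule LIMSEQ_le_const) (use adm_nonneg[OF adm] in auto)
  ultimately have a0: "\<alpha> > 0" by simp
  define \<epsilon> where "\<epsilon> = a 1 + \<alpha>"
  have ep: "\<epsilon> > 0" using a0 adm_nonneg[OF adm, of 1] unfolding \<epsilon>_def by simp
  have nr: "\<epsilon> \<notin> {a k | k. k \<ge> 1}"
  proof
    assume "\<epsilon> \<in> {a k | k. k \<ge> 1}"
    then obtain k where "k \<ge> 1" "\<epsilon> = a k" by blast
    then show False using adm_mono[OF adm, of 1 k] a0 unfolding \<epsilon>_def by simp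
  qed
  obtain \<delta> where d: "\<delta> > 0" "\<forall>m\<ge>1. \<forall>n\<ge>1. a m + a n < \<epsilon> + \<delta> \<longrightarrow> a m + a n \<le> \<epsilon>"
    using c ep nr unfolding cond_iv_def by blast
  obtain n where n: "n \<ge> 1" "a n < \<alpha> + \<delta>" using adm_close1[OF lim d(1)] by blast
  have "a 1 + a n < \<epsilon> + \<delta>" using n unfolding \<epsilon>_def by simp
  then have "a 1 + a n \<le> \<epsilon>" using d n by auto
  moreover have "\<alpha> < a n" using adm_lower[OF adm lim n(1)] .
  ultimately show False unfolding \<epsilon>_def by simp
qed

lemma i_iv:
  assumes adm: "admissible_seq a" and lim: "a \<longlonglongrightarrow> 0"
  shows "cond_iv a"
  unfolding cond_iv_def
proof (intro allI impI)
  fix \<epsilon> :: real assume e: "\<epsilon> > 0" and nr: "\<epsilon> \<notin> {a k | k. k \<ge> 1}"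
  have e2: "\<epsilon>/2 > 0" using e by simp
  obtain K0 where K0: "\<forall>n\<ge>K0. a n < 0 + \<epsilon>/2" using adm_close[OF lim e2] by blast
  define T where "T = (\<lambda>m. \<bar>a m - \<epsilon>\<bar>) ` {1..K0}"
  define \<eta> where "\<eta> = Min (insert (\<epsilon>/2) T)"
  have fT: "finite (insert (\<epsilon>/2) T)" unfolding T_def by simp
  have Tpos: "\<forall>t\<in>T. 0 < t"
  proof
    fix t assume "t \<in> T"
    then obtain m where m: "m \<in> {1..K0}" "t = \<bar>a m - \<epsilon>\<bar>" unfolding T_def by blast
    have "a m \<noteq> \<epsilon>" using nr m(1) by auto
    then show "0 < t" using m by simp
  qed
  have eta: "\<eta> > 0" unfolding \<eta>_def using Min_gr_iff[OF fT] e2 Tpos by blast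
  have eta2: "\<eta> \<le> \<epsilon>/2" unfolding \<eta>_def using Min_le[OF fT] by blast
  have etam: "\<eta> \<le> \<bar>a m - \<epsilon>\<bar>" if "m \<in> {1..K0}" for m
    unfolding \<eta>_def using Min_le[OF fT] that unfolding T_def by blast
  obtain K where K: "\<forall>n\<ge>K. a n < 0 + \<eta>" using adm_close[OF lim eta] by blast
  have key: False if m: "m \<ge> 1" and n: "n \<ge> 1" "n \<ge> K" and s: "\<epsilon> < a m + a n" "a m + a n < \<epsilon> + \<eta>" for m n
  proof -
    have an: "a n < \<eta>" using K n by auto
    have an0: "0 \<le> a n" using adm_nonneg[OF adm n(1)] .
    have "a m > \<epsilon>/2" using an eta2 s by simp
    then have "m < K0"
    proof -
      assume h: "a m > \<epsilon>/2"
      show "m < K0"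
      proof (rule ccontr)
        assume "\<not> m < K0" then have "a m < 0 + \<epsilon>/2" using K0 by simp
        then show False using h by simp
      qed
    qed
    then have "\<eta> \<le> \<bar>a m - \<epsilon>\<bar>" using etam m by simp
    then show False using s an an0 by (cases "a m \<ge> \<epsilon>") auto
  qed
  define P where "P = {p \<in> {1..K} \<times> {1..K}. a (fst p) + a (snd p) > \<epsilon>}"
  define S where "S = (\<lambda>p. a (fst p) + a (snd p) - \<epsilon>) ` P"
  have fS: "finite (insert \<eta> S)" unfolding S_def P_def by simp
  define \<delta> where "\<delta> = Min (insert \<eta> S)"
  have Spos: "\<forall>s\<in>S. 0 < s" unfolding S_def P_def by auto
  have dpos: "\<delta> > 0" unfolding \<delta>_def using Min_gr_iff[OF fS] eta Spos by blast
  have deta: "\<delta> \<le> \<eta>" unfolding \<delta>_def using Min_le[OF fS] by blast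
  have dS: "\<delta> \<le> a m + a n - \<epsilon>" if "(m, n) \<in> P" for m n
  proof -
    have "a m + a n - \<epsilon> \<in> insert \<eta> S" unfolding S_def using that by force
    then show ?thesis unfolding \<delta>_def using Min_le[OF fS] by blast
  qed
  show "\<exists>\<delta>>0. \<forall>m\<ge>1. \<forall>n\<ge>1. a m + a n < \<epsilon> + \<delta> \<longrightarrow> a m + a n \<le> \<epsilon>"
  proof (intro exI[of _ \<delta>] conjI dpos allI impI)
    fix m n :: nat assume m: "m \<ge> 1" and n: "n \<ge> 1" and lt: "a m + a n < \<epsilon> + \<delta>"
    show "a m + a n \<le> \<epsilon>"
    proof (rule ccontr)
      assume gt: "\<not> a m + a n \<le> \<epsilon>"
      show False
      proof (cases "m \<le> K \<and> n \<le> K")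
        case True
        then have "(m, n) \<in> P" unfolding P_def using m n gt by auto
        then show False using dS lt by fastforce
      next
        case False
        then consider "\<not> m \<le> K" | "\<not> n \<le> K" by blast
        then show False
        proof cases
          assume "\<not> m \<le> K"
          then show False using key[of n m] m n gt lt deta by (simp add: add.commute)
        next
          assume "\<not> n \<le> K"
          then show False using key[of m n] m n gt lt deta by simp
        qed
      qed
    qed
  qed
qed

theorem lemma5p1:
  shows "(\<forall>(a::nat \<Rightarrow> real) (\<alpha>::real). admissible_seq a \<longrightarrow> a \<longlonglongrightarrow> \<alpha> \<longrightarrow>
            ((\<alpha> = 0 \<longleftrightarrow> cond_ii a) \<and> (\<alpha> = 0 \<longleftrightarrow> cond_iii a) \<and> (\<alpha> = 0 \<longleftrightarrow> cond_iv a)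
             \<and> (cond_v a \<longrightarrow> \<alpha> = 0)))
         \<and> (\<exists>(a::nat \<Rightarrow> real). admissible_seq a \<and> a \<longlonglongrightarrow> 0 \<and> \<not> cond_v a)"
proof (intro conjI allI impI)
  fix a :: "nat \<Rightarrow> real" and \<alpha> :: real
  assume adm: "admissible_seq a" and lim: "a \<longlonglongrightarrow> \<alpha>"
  show "\<alpha> = 0 \<longleftrightarrow> cond_ii a" using i_ii[OF adm] ii_i[OF adm lim] lim by auto
  show "\<alpha> = 0 \<longleftrightarrow> cond_iii a" using i_iii[OF adm] iii_i[OF adm lim] lim by auto
  show "\<alpha> = 0 \<longleftrightarrow> cond_iv a" using i_iv[OF adm] iv_i[OF adm lim] lim by auto
  show "cond_v a \<Longrightarrow> \<alpha> = 0"
    by (rule iv_i[OF adm lim]) (auto simp: cond_v_def cond_iv_def)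
next
  define a :: "nat \<Rightarrow> real" where "a = (\<lambda>n. 1 / real n)"
  have adm: "admissible_seq a" unfolding admissible_seq_def a_def
    by (auto simp: frac_less2)
  have lim: "a \<longlonglongrightarrow> 0" unfolding a_def by (rule lim_inverse_n')
  have nv: "\<not> cond_v a"
  proof
    assume "cond_v a"
    then obtain \<delta> where d: "\<delta> > 0" "\<forall>m\<ge>1. \<forall>n\<ge>1. a m + a n < 1 + \<delta> \<longrightarrow> a m + a n \<le> 1"
      unfolding cond_v_def by (meson zero_less_one)
    obtain n where n: "n \<ge> 1" "a n < 0 + \<delta>" using adm_close1[OF lim d(1)] by blast
    have "a 1 = 1" unfolding a_def by simp
    moreover have "a n > 0" using n(1) unfolding a_def by simp
    ultimately show False using d n by force
  qed
  show "\<exists>a. admissible_seq a \<and> a \<longlonglongrightarrow> 0 \<and> \<not> cond_v a" using adm lim nv by blast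
qed

end
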